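(* Let $K$ be a field, $m\ge2$, $d_1,\ldots,d_m$ positive integers, $S=K[x_1,\ldots,x_m,y_1,\ldots,y_m]$, and $I_2(D)\subset S$ the ideal generated by the $2$-minors of $D=\begin{pmatrix}x_1^{d_1}&\cdots&x_m^{d_m}\\ y_1^{d_1}&\cdots&y_m^{d_m}\end{pmatrix}$. For $1\le i<j\le m$ let $f_{ij}=x_i^{d_i}y_j^{d_j}-x_j^{d_j}y_i^{d_i}$. Then for any term order $\prec$ on $S$, the reduced Gröbner basis of $I_2(D)$ with respect to $\prec$ is $\mathcal{G}=\{f_{ij}:1\le i<j\le m\}$. *)

theory Defs
  imports Main "HOL-Library.Poly_Mapping"
begin

(* Multivariate polynomials over 'a in variables of type 'v:
  monomials are exponent vectors 'v \<Rightarrow>0 nat, polynomials are finitely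
  supported maps from monomials to coefficients (convolution product). *)

type_synonym ('v, 'a) mpoly = "('v \<Rightarrow>\<^sub>0 nat) \<Rightarrow>\<^sub>0 'a"

definition term_order :: "(('v \<Rightarrow>\<^sub>0 nat) \<Rightarrow> ('v \<Rightarrow>\<^sub>0 nat) \<Rightarrow> bool) \<Rightarrow> bool" where
  "term_order lt \<longleftrightarrow>
     (\<forall>s. \<not> lt s s) \<and>
     (\<forall>s t u. lt s t \<longrightarrow> lt t u \<longrightarrow> lt s u) \<and>
     (\<forall>s t. s \<noteq> t \<longrightarrow> lt s t \<or> lt t s) \<and>
     (\<forall>s t u. lt s t \<longrightarrow> lt (s + u) (t + u)) \<and>
     (\<forall>t. t \<noteq> 0 \<longrightarrow> lt 0 t)"

definition lm :: "(('v \<Rightarrow>\<^sub>0 nat) \<Rightarrow> ('v \<Rightarrow>\<^sub>0 nat) \<Rightarrow> bool) \<Rightarrow> ('v, 'a::zero) mpoly \<Rightarrow> ('v \<Rightarrow>\<^sub>0 nat)" where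
  "lm lt p = (THE t. t \<in> Poly_Mapping.keys p \<and> (\<forall>s\<in>Poly_Mapping.keys p. s \<noteq> t \<longrightarrow> lt s t))"

definition lc :: "(('v \<Rightarrow>\<^sub>0 nat) \<Rightarrow> ('v \<Rightarrow>\<^sub>0 nat) \<Rightarrow> bool) \<Rightarrow> ('v, 'a::zero) mpoly \<Rightarrow> 'a" where
  "lc lt p = Poly_Mapping.lookup p (lm lt p)"

definition mdvd :: "('v \<Rightarrow>\<^sub>0 nat) \<Rightarrow> ('v \<Rightarrow>\<^sub>0 nat) \<Rightarrow> bool" where
  "mdvd s t \<longleftrightarrow> (\<forall>v. Poly_Mapping.lookup s v \<le> Poly_Mapping.lookup t v)"

definition gen_ideal :: "('v, 'a::comm_ring_1) mpoly set \<Rightarrow> ('v, 'a) mpoly set" where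
  "gen_ideal B = {p. \<exists>F c. finite F \<and> F \<subseteq> B \<and> p = (\<Sum>f\<in>F. c f * f)}"

(* Groebner basis: finite subset of I whose leading monomials generate the
  initial ideal of I. *)
definition is_GB :: "(('v \<Rightarrow>\<^sub>0 nat) \<Rightarrow> ('v \<Rightarrow>\<^sub>0 nat) \<Rightarrow> bool) \<Rightarrow> ('v, 'a::comm_ring_1) mpoly set \<Rightarrow> ('v, 'a) mpoly set \<Rightarrow> bool" where
  "is_GB lt I G \<longleftrightarrow> finite G \<and> G \<subseteq> I \<and>
     (\<forall>f\<in>I. f \<noteq> 0 \<longrightarrow> (\<exists>g\<in>G. g \<noteq> 0 \<and> mdvd (lm lt g) (lm lt f)))"

definition is_reduced_GB :: "(('v \<Rightarrow>\<^sub>0 nat) \<Rightarrow> ('v \<Rightarrow>\<^sub>0 nat) \<Rightarrow> bool) \<Rightarrow> ('v, 'a::comm_ring_1) mpoly set \<Rightarrow> ('v, 'a) mpoly set \<Rightarrow> bool" where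
  "is_reduced_GB lt I G \<longleftrightarrow> is_GB lt I G \<and> 0 \<notin> G \<and>
     (\<forall>g\<in>G. lc lt g = 1) \<and>
     (\<forall>g\<in>G. \<forall>g'\<in>G. g' \<noteq> g \<longrightarrow> (\<forall>t\<in>Poly_Mapping.keys g. \<not> mdvd (lm lt g') t))"

definition monic :: "(('v \<Rightarrow>\<^sub>0 nat) \<Rightarrow> ('v \<Rightarrow>\<^sub>0 nat) \<Rightarrow> bool) \<Rightarrow> ('v, 'a::field) mpoly \<Rightarrow> ('v, 'a) mpoly" where
  "monic lt p = Poly_Mapping.map (\<lambda>c. c / lc lt p) p"

definition varpow :: "'v \<Rightarrow> nat \<Rightarrow> ('v, 'a::{zero,one}) mpoly" where
  "varpow v k = Poly_Mapping.single (Poly_Mapping.single v k) 1"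

(* Variables of S = K[x_1..x_m, y_1..y_m] indexed by bool \<times> 'n, CARD('n) = m:
  x_i = (False, i), y_i = (True, i).  The matrix D has rows x (False), y (True). *)
definition Dmat :: "('n \<Rightarrow> nat) \<Rightarrow> bool \<Rightarrow> 'n \<Rightarrow> (bool \<times> 'n, 'a::{zero,one}) mpoly" where
  "Dmat d r i = varpow (r, i) (d i)"

definition minor2 :: "(bool \<Rightarrow> 'n \<Rightarrow> ('v, 'a::comm_ring_1) mpoly) \<Rightarrow> 'n \<Rightarrow> 'n \<Rightarrow> ('v, 'a) mpoly" where
  "minor2 M i j = M False i * M True j - M False j * M True i"

definition fpoly :: "('n \<Rightarrow> nat) \<Rightarrow> 'n \<Rightarrow> 'n \<Rightarrow> (bool \<times> 'n, 'a::comm_ring_1) mpoly" where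
  "fpoly d i j = varpow (False, i) (d i) * varpow (True, j) (d j)
               - varpow (False, j) (d j) * varpow (True, i) (d i)"

end

theory Submission
  imports Defs
begin

definition mon :: "('n \<Rightarrow> nat) \<Rightarrow> 'n \<Rightarrow> 'n \<Rightarrow> (bool \<times> 'n) \<Rightarrow>\<^sub>0 nat" where
  "mon d i j = Poly_Mapping.single (False, i) (d i) + Poly_Mapping.single (True, j) (d j)"

definition BB :: "('n \<Rightarrow> nat) \<Rightarrow> 'n \<Rightarrow> 'n \<Rightarrow> (bool \<times> 'n, 'a::comm_ring_1) mpoly" where
  "BB d i j = Poly_Mapping.single (mon d i j) 1 - Poly_Mapping.single (mon d j i) 1"

lemma lookup_mon:
  "Poly_Mapping.lookup (mon d i j) (b, k) = (if b then (if k = j then d j else 0) else (if k = i then d i else 0))"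
  by (auto simp: mon_def lookup_add lookup_single when_def)

lemma mon_neq: "i \<noteq> j \<Longrightarrow> d i > 0 \<Longrightarrow> mon d i j \<noteq> mon d j i"
  by (metis lookup_mon less_irrefl)

lemma fpoly_BB: "fpoly d i j = BB d i j"
  by (simp add: fpoly_def BB_def varpow_def mult_single mon_def)

lemma minor2_BB: "minor2 (Dmat d) i j = BB d i j"
  by (simp add: minor2_def Dmat_def BB_def varpow_def mult_single mon_def)

lemma keys_BB: "mon d i j \<noteq> mon d j i \<Longrightarrow> Poly_Mapping.keys (BB d i j :: (bool \<times> 'n, 'a::comm_ring_1) mpoly) = {mon d i j, mon d j i}"
  apply (rule set_eqI)
  apply (auto simp: BB_def in_keys_iff lookup_minus lookup_single when_def)
  done

lemma mdvd_mon: "mdvd (mon d k l) (mon d p q) \<Longrightarrow> k \<noteq> l \<Longrightarrow> \<forall>i. d i > 0 \<Longrightarrow> k = p \<and> l = q"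
  unfolding mdvd_def
  apply (frule spec[of _ "(False, k)"])
  apply (drule spec[of _ "(True, l)"])
  apply (auto simp: lookup_mon split: if_splits)
  apply (metis neq0_conv)+
  done

lemma to_props:
  assumes "term_order lt"
  shows "\<And>s. \<not> lt s s" "\<And>s t u. lt s t \<Longrightarrow> lt t u \<Longrightarrow> lt s u"
    "\<And>s t. s \<noteq> t \<Longrightarrow> lt s t \<or> lt t s" "\<And>s t u. lt s t \<Longrightarrow> lt (s + u) (t + u)"
  using assms unfolding term_order_def by blast+

lemma max_exists:
  assumes "term_order lt" "finite A" "A \<noteq> {}"
  shows "\<exists>t\<in>A. \<forall>s\<in>A. s \<noteq> t \<longrightarrow> lt s t"
  using assms(2,3)
proof (induction A rule: finite_ne_induct)
  case (singleton x) then show ?case by auto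
next
  case (insert x F)
  then obtain t where t: "t \<in> F" "\<forall>s\<in>F. s \<noteq> t \<longrightarrow> lt s t" by auto
  show ?case
  proof (cases "lt t x")
    case True
    have tr: "lt s x" if "lt s t" for s using to_props(2)[OF assms(1) that True] .
    show ?thesis
    proof (rule bexI[of _ x])
      show "\<forall>s\<in>insert x F. s \<noteq> x \<longrightarrow> lt s x"
      proof (intro ballI impI)
        fix s assume "s \<in> insert x F" "s \<noteq> x"
        then have "s \<in> F" by auto
        then show "lt s x" using t tr True by (cases "s = t") auto
      qed
    qed simp
  next
    case False
    then have "x = t \<or> lt x t" using to_props(3)[OF assms(1)] by blast
    then show ?thesis using t by auto
  qed
qed

lemma lm_prop:
  assumes "term_order lt" "finite A" "A \<noteq> {}" "Poly_Mapping.keys p = A"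
  shows "lm lt p \<in> A \<and> (\<forall>s\<in>A. s \<noteq> lm lt p \<longrightarrow> lt s (lm lt p))"
proof -
  obtain t where t: "t \<in> A" "\<forall>s\<in>A. s \<noteq> t \<longrightarrow> lt s t" using max_exists[OF assms(1-3)] by blast
  have "\<exists>!t. t \<in> A \<and> (\<forall>s\<in>A. s \<noteq> t \<longrightarrow> lt s t)"
  proof (rule ex1I[of _ t])
    show "t \<in> A \<and> (\<forall>s\<in>A. s \<noteq> t \<longrightarrow> lt s t)" using t by auto
    fix u assume u: "u \<in> A \<and> (\<forall>s\<in>A. s \<noteq> u \<longrightarrow> lt s u)"
    show "u = t"
    proof (rule ccontr)
      assume "u \<noteq> t"
      then have "lt u t" "lt t u" using t u by auto
      then show False using to_props(1,2)[OF assms(1)] by metis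
    qed
  qed
  then show ?thesis unfolding lm_def assms(4) by (rule theI')
qed

lemma lm_BB:
  assumes "term_order lt" "mon d i j \<noteq> mon d j i" "lt (mon d j i) (mon d i j)"
  shows "lm lt (BB d i j :: (bool \<times> 'n, 'a::comm_ring_1) mpoly) = mon d i j"
proof -
  have "lm lt (BB d i j :: (bool \<times> 'n, 'a) mpoly) \<in> {mon d i j, mon d j i} \<and>
    (\<forall>s\<in>{mon d i j, mon d j i}. s \<noteq> lm lt (BB d i j :: (bool \<times> 'n, 'a) mpoly) \<longrightarrow> lt s (lm lt (BB d i j :: (bool \<times> 'n, 'a) mpoly)))"
    by (rule lm_prop[OF assms(1)]) (auto simp: keys_BB[OF assms(2)])
  moreover have "\<not> lt (mon d i j) (mon d j i)"
    using assms(3) to_props(1,2)[OF assms(1)] by metis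
  ultimately show ?thesis using assms(2) by force
qed

lemma lm_uminus: "lm lt (- p) = lm lt (p :: ('v, 'a::ab_group_add) mpoly)"
  unfolding lm_def by simp

lemma BB_swap: "BB d i j = - (BB d j i :: (bool \<times> 'n, 'a::comm_ring_1) mpoly)"
  by (simp add: BB_def)

lemma monic_BB:
  assumes "term_order lt" "mon d i j \<noteq> mon d j i"
  shows "monic lt (BB d i j :: (bool \<times> 'n, 'a::field) mpoly) =
     (if lt (mon d j i) (mon d i j) then BB d i j else BB d j i)"
proof -
  have ne: "mon d j i \<noteq> mon d i j" using assms(2) by auto
  show ?thesis
  proof (cases "lt (mon d j i) (mon d i j)")
    case True
    then have "lc lt (BB d i j :: (bool \<times> 'n, 'a) mpoly) = 1"
      using assms(2) unfolding lc_def lm_BB[OF assms True] by (simp add: BB_def lookup_minus lookup_single when_def)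
    then show ?thesis using True
      by (intro poly_mapping_eqI) (simp add: monic_def map.rep_eq when_def)
  next
    case False
    then have F: "lt (mon d i j) (mon d j i)" using to_props(3)[OF assms(1) assms(2)] by blast
    then have "lc lt (BB d i j :: (bool \<times> 'n, 'a) mpoly) = -1"
      using assms(2) unfolding lc_def BB_swap[of d i j] lm_uminus lm_BB[OF assms(1) ne F] by (simp add: BB_def lookup_minus lookup_single when_def)
    then show ?thesis using False
      by (intro poly_mapping_eqI) (auto simp: monic_def map.rep_eq when_def BB_def lookup_minus lookup_single)
  qed
qed

definition inv_m :: "('n::finite \<Rightarrow> nat) \<Rightarrow> ((bool \<times> 'n) \<Rightarrow>\<^sub>0 nat) \<Rightarrow> ('n \<Rightarrow> nat \<times> nat) \<times> nat" where
  "inv_m d s = ((\<lambda>i. (Poly_Mapping.lookup s (False,i) mod d i,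
      Poly_Mapping.lookup s (False,i) + Poly_Mapping.lookup s (True,i))),
     \<Sum>i\<in>UNIV. Poly_Mapping.lookup s (False,i) div d i)"

lemma sum_shift:
  fixes x :: "'n::finite \<Rightarrow> nat"
  assumes "d i > 0"
  shows "(\<Sum>k\<in>UNIV. (x k + (if k = i then d i else 0)) div d k) = (\<Sum>k\<in>UNIV. x k div d k) + 1"
proof -
  have "(\<Sum>k\<in>UNIV. (x k + (if k = i then d i else 0)) div d k) = (\<Sum>k\<in>UNIV. x k div d k + (if k = i then 1 else 0))"
    using assms by (intro sum.cong) (auto simp: div_add_self2)
  also have "\<dots> = (\<Sum>k\<in>UNIV. x k div d k) + 1" by (simp add: sum.distrib)
  finally show ?thesis .
qed

lemma inv_swap:
  assumes "i \<noteq> j" "d i > 0" "d j > 0"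
  shows "inv_m d (u + mon d i j) = inv_m d (u + mon d j i)"
proof -
  have A: "(\<lambda>k. Poly_Mapping.lookup (u + mon d i j) (False,k)) = (\<lambda>k. Poly_Mapping.lookup u (False,k) + (if k = i then d i else 0))"
    "(\<lambda>k. Poly_Mapping.lookup (u + mon d j i) (False,k)) = (\<lambda>k. Poly_Mapping.lookup u (False,k) + (if k = j then d j else 0))"
    by (auto simp: lookup_add lookup_mon)
  have B: "(\<Sum>k\<in>UNIV. Poly_Mapping.lookup (u + mon d i j) (False,k) div d k) = (\<Sum>k\<in>UNIV. Poly_Mapping.lookup u (False,k) div d k) + 1"
    "(\<Sum>k\<in>UNIV. Poly_Mapping.lookup (u + mon d j i) (False,k) div d k) = (\<Sum>k\<in>UNIV. Poly_Mapping.lookup u (False,k) div d k) + 1"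
    using sum_shift[of d i "\<lambda>k. Poly_Mapping.lookup u (False,k)"] sum_shift[of d j "\<lambda>k. Poly_Mapping.lookup u (False,k)"] assms
    by (simp_all add: lookup_add lookup_mon)
  show ?thesis unfolding inv_m_def B
    using assms by (auto simp: lookup_add lookup_mon fun_eq_iff)
qed

definition LL :: "('n::finite \<Rightarrow> nat) \<Rightarrow> ('n \<Rightarrow> nat \<times> nat) \<times> nat \<Rightarrow> (bool \<times> 'n, 'a::comm_ring_1) mpoly \<Rightarrow> 'a" where
  "LL d v p = (\<Sum>s\<in>Poly_Mapping.keys p. if inv_m d s = v then Poly_Mapping.lookup p s else 0)"

lemma LL_eq:
  assumes "finite A" "Poly_Mapping.keys p \<subseteq> A"
  shows "LL d v p = (\<Sum>s\<in>A. if inv_m d s = v then Poly_Mapping.lookup p s else 0)"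
  unfolding LL_def using assms by (intro sum.mono_neutral_left) (auto simp: in_keys_iff)

lemma LL_add: "LL d v (p + q) = LL d v p + LL d v q"
proof -
  let ?A = "Poly_Mapping.keys p \<union> Poly_Mapping.keys q"
  have "Poly_Mapping.keys (p + q) \<subseteq> ?A" by (rule keys_add)
  then show ?thesis
    by (simp add: LL_eq[of ?A] lookup_add sum.distrib[symmetric] if_distrib[symmetric])
      (intro sum.cong, auto simp: lookup_add)
qed

lemma LL_diff: "LL d v (p - q) = LL d v p - LL d v q"
proof -
  let ?A = "Poly_Mapping.keys p \<union> Poly_Mapping.keys q"
  have "Poly_Mapping.keys (p - q) \<subseteq> ?A"
    by (auto simp: in_keys_iff lookup_minus)
  then show ?thesis
    by (simp add: LL_eq[of ?A] lookup_minus sum_subtractf[symmetric])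
      (intro sum.cong, auto simp: lookup_minus)
qed

lemma LL_zero: "LL d v 0 = 0" by (simp add: LL_def)

lemma LL_single: "LL d v (Poly_Mapping.single k a) = (if inv_m d k = v then a else 0)"
  by (subst LL_eq[of "{k}"]) auto

lemma LL_sum: "finite F \<Longrightarrow> LL d v (\<Sum>f\<in>F. g f) = (\<Sum>f\<in>F. LL d v (g f))"
  by (induction F rule: finite_induct) (auto simp: LL_zero LL_add)

lemma update_single: "a \<notin> Poly_Mapping.keys f \<Longrightarrow> Poly_Mapping.update a b f = Poly_Mapping.single a b + f"
  by (rule poly_mapping_eqI) (auto simp: lookup_update lookup_add lookup_single when_def in_keys_iff)

lemma LL_mult_BB:
  assumes "i \<noteq> j" "d i > 0" "d j > 0"
  shows "LL d v (c * BB d i j) = 0"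
proof (induction c rule: update_induct)
  case const then show ?case by (simp add: LL_zero)
next
  case (update f a b)
  have "LL d v (Poly_Mapping.single a b * BB d i j) = 0"
    using inv_swap[OF assms, of a]
    by (simp add: BB_def right_diff_distrib mult_single LL_diff LL_single)
  then show ?case using update by (simp add: update_single distrib_right LL_add)
qed

lemma LL_ideal:
  assumes "\<forall>i. d i > 0" "f \<in> gen_ideal {minor2 (Dmat d :: bool \<Rightarrow> 'n::{finite,linorder} \<Rightarrow> (bool \<times> 'n, 'a::field) mpoly) i j | i j. i < j}"
  shows "LL d v f = 0"
proof -
  obtain F c where F: "finite F" "F \<subseteq> {minor2 (Dmat d :: bool \<Rightarrow> 'n \<Rightarrow> (bool \<times> 'n, 'a) mpoly) i j | i j. i < j}"
    "f = (\<Sum>g\<in>F. c g * g)" using assms(2) unfolding gen_ideal_def by blast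
  have "LL d v (c g * g) = 0" if gF: "g \<in> F" for g
  proof -
    obtain i j where "i < j" "g = minor2 (Dmat d) i j" using F(2) gF by auto
    then show ?thesis using LL_mult_BB[of i j d v "c g"] assms(1) by (simp add: minor2_BB)
  qed
  then show ?thesis using F by (simp add: LL_sum)
qed

lemma sum_ex_gt:
  fixes f g :: "'n::finite \<Rightarrow> nat"
  assumes "(\<Sum>i\<in>UNIV. f i) = (\<Sum>i\<in>UNIV. g i)" "f k \<noteq> g k"
  shows "\<exists>i. f i > g i"
proof (rule ccontr)
  assume "\<not> (\<exists>i. f i > g i)"
  then have le: "\<forall>i\<in>UNIV. f i \<le> g i" by (simp add: not_less)
  then have "f k < g k" using assms(2) by (simp add: order_less_le)
  then have "(\<Sum>i\<in>UNIV. f i) < (\<Sum>i\<in>UNIV. g i)"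
    using le by (intro sum_strict_mono_ex1) auto
  then show False using assms(1) by simp
qed

lemma key:
  fixes d :: "'n::finite \<Rightarrow> nat"
  assumes to: "term_order lt" and dpos: "\<forall>i. d i > 0"
    and std: "\<forall>i j. i \<noteq> j \<longrightarrow> lt (mon d j i) (mon d i j) \<longrightarrow> \<not> mdvd (mon d i j) t"
  shows "inv_m d s = inv_m d t \<Longrightarrow> s = t \<or> lt t s"
proof -
  define q where "q s i = Poly_Mapping.lookup s (False, i) div d i" for s i
  define mu where "mu s = (\<Sum>i\<in>UNIV. (q s i - q t i) + (q t i - q s i))" for s
  have "\<forall>s. mu s = n \<longrightarrow> inv_m d s = inv_m d t \<longrightarrow> s = t \<or> lt t s" for n
  proof (induction n rule: less_induct)
    case (less n)
    show ?case
    proof (intro allI impI)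
      fix s assume mus: "mu s = n" and inv: "inv_m d s = inv_m d t"
      let ?x = "\<lambda>s i. Poly_Mapping.lookup s (False, i)"
      let ?y = "\<lambda>s i. Poly_Mapping.lookup s (True, i)"
      have modeq: "?x s i mod d i = ?x t i mod d i" for i
        using inv unfolding inv_m_def by (metis (no_types, lifting) fst_conv prod.inject)
      have sumeq: "?x s i + ?y s i = ?x t i + ?y t i" for i
        using inv unfolding inv_m_def by (metis (no_types, lifting) snd_conv prod.inject)
      have qsum: "(\<Sum>i\<in>UNIV. q s i) = (\<Sum>i\<in>UNIV. q t i)"
        using inv unfolding inv_m_def q_def by simp
      have xdec: "?x s i = d i * q s i + ?x t i mod d i" "?x t i = d i * q t i + ?x t i mod d i" for i
        unfolding q_def using modeq[of i] by (metis div_mult_mod_eq mult.commute)+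
      show "s = t \<or> lt t s"
      proof (cases "\<forall>i. q s i = q t i")
        case True
        have "s = t"
        proof (rule poly_mapping_eqI)
          fix v :: "bool \<times> 'n"
          obtain b k where v: "v = (b, k)" by (cases v)
          have "?x s k = ?x t k" using xdec[of k] True by simp
          moreover then have "?y s k = ?y t k" using sumeq[of k] by simp
          ultimately show "Poly_Mapping.lookup s v = Poly_Mapping.lookup t v"
            unfolding v by (cases b) auto
        qed
        then show ?thesis by simp
      next
        case False
        then obtain k where k: "q s k \<noteq> q t k" by blast
        obtain i where i: "q s i > q t i" using sum_ex_gt[OF qsum k] by blast
        obtain j where j: "q t j > q s j" using sum_ex_gt[OF qsum[symmetric]] k by metis
        have ij: "i \<noteq> j" using i j by auto
        have di: "d i * q s i \<ge> d i * q t i + d i"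
          using mult_le_mono2[of "Suc (q t i)" "q s i" "d i"] i by simp
        have dj: "d j * q t j \<ge> d j * q s j + d j"
          using mult_le_mono2[of "Suc (q s j)" "q t j" "d j"] j by simp
        have xsi: "?x s i \<ge> ?x t i + d i" using xdec[of i] di by linarith
        have xtj: "?x t j \<ge> ?x s j + d j" using xdec[of j] dj by linarith
        have yti: "?y t i \<ge> d i" using xsi sumeq[of i] by linarith
        have ysj: "?y s j \<ge> d j" using xtj sumeq[of j] by linarith
        have dvt: "mdvd (mon d j i) t"
          unfolding mdvd_def
        proof
          fix v :: "bool \<times> 'n"
          obtain b k where v: "v = (b, k)" by (cases v)
          show "Poly_Mapping.lookup (mon d j i) v \<le> Poly_Mapping.lookup t v"
            unfolding v lookup_mon using xtj yti by (cases b) auto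
        qed
        have dvs: "mdvd (mon d i j) s"
          unfolding mdvd_def
        proof
          fix v :: "bool \<times> 'n"
          obtain b k where v: "v = (b, k)" by (cases v)
          show "Poly_Mapping.lookup (mon d i j) v \<le> Poly_Mapping.lookup s v"
            unfolding v lookup_mon using xsi ysj by (cases b) auto
        qed
        have neq: "mon d i j \<noteq> mon d j i" using mon_neq[OF ij] dpos by blast
        have "\<not> lt (mon d i j) (mon d j i)" using std ij dvt by metis
        then have ltm: "lt (mon d j i) (mon d i j)" using to_props(3)[OF to neq] by blast
        define r where "r = s - mon d i j"
        have sr: "s = r + mon d i j"
          unfolding r_def using dvs unfolding mdvd_def
          by (intro poly_mapping_eqI) (metis le_add_diff_inverse2 lookup_add lookup_minus)
        define s' where "s' = r + mon d j i"
        have lts: "lt s' s" unfolding s'_def sr using to_props(4)[OF to ltm, of r]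
          by (simp add: add.commute)
        have inv': "inv_m d s' = inv_m d t"
          using inv inv_swap[OF ij, of d r] dpos unfolding s'_def sr by simp
        have xs': "?x s' k = (if k = i then ?x s k - d i else if k = j then ?x s k + d j else ?x s k)" for k
          using xsi unfolding s'_def r_def
          by (auto simp: lookup_add lookup_minus lookup_mon ij)
        have qi: "q s' i = q s i - 1"
        proof -
          have "?x s i \<ge> d i" using xsi by simp
          then have "q s i = Suc (q s' i)" unfolding q_def xs'[of i] using dpos
            by (simp add: le_div_geq)
          then show ?thesis by simp
        qed
        have qj: "q s' j = q s j + 1"
          unfolding q_def xs'[of j] using ij dpos by (simp add: div_add_self2)
        have qk: "q s' k = q s k" if "k \<noteq> i" "k \<noteq> j" for k
          unfolding q_def xs'[of k] using that by simp
        have "mu s' < mu s"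
          unfolding mu_def
        proof (rule sum_strict_mono_ex1)
          show "\<forall>k\<in>UNIV. q s' k - q t k + (q t k - q s' k) \<le> q s k - q t k + (q t k - q s k)"
          proof
            fix k :: 'n
            show "q s' k - q t k + (q t k - q s' k) \<le> q s k - q t k + (q t k - q s k)"
              using qi qj qk[of k] i j by (cases "k = i"; cases "k = j") auto
          qed
          show "\<exists>k\<in>UNIV. q s' k - q t k + (q t k - q s' k) < q s k - q t k + (q t k - q s k)"
            using qi i by (intro bexI[of _ i]) auto
        qed simp
        then have "s' = t \<or> lt t s'" using less.IH mus inv' by blast
        then show ?thesis using lts to_props(2)[OF to] by blast
      qed
    qed
  qed
  then show "inv_m d s = inv_m d t \<Longrightarrow> s = t \<or> lt t s" by blast
qed

lemma G_char:
  fixes d :: "'n::{finite,linorder} \<Rightarrow> nat"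
  assumes to: "term_order lt" and dpos: "\<forall>i. d i > 0"
  shows "g \<in> monic lt ` {fpoly d i j | i j. i < j} \<longleftrightarrow>
    (\<exists>i j. i \<noteq> j \<and> lt (mon d j i) (mon d i j) \<and> g = (BB d i j :: (bool \<times> 'n, 'a::field) mpoly))"
proof
  assume "g \<in> monic lt ` {fpoly d i j | i j. i < j}"
  then obtain i j where ij: "i < j" "g = monic lt (fpoly d i j)" by blast
  have ne: "mon d i j \<noteq> mon d j i" using mon_neq[of i j d] ij dpos by auto
  have ne': "mon d j i \<noteq> mon d i j" using ne by auto
  show "\<exists>i j. i \<noteq> j \<and> lt (mon d j i) (mon d i j) \<and> g = BB d i j"
  proof (cases "lt (mon d j i) (mon d i j)")
    case True
    then have "g = BB d i j" using ij monic_BB[OF to ne] by (simp add: fpoly_BB)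
    moreover have "i \<noteq> j" using ij by simp
    ultimately show ?thesis using True by blast
  next
    case False
    then have F: "lt (mon d i j) (mon d j i)" using to_props(3)[OF to ne] by blast
    then have "g = BB d j i" using False ij monic_BB[OF to ne] by (simp add: fpoly_BB)
    moreover have "j \<noteq> i" using ij by simp
    ultimately show ?thesis using F by blast
  qed
next
  assume "\<exists>i j. i \<noteq> j \<and> lt (mon d j i) (mon d i j) \<and> g = (BB d i j :: (bool \<times> 'n, 'a::field) mpoly)"
  then obtain i j where ij: "i \<noteq> j" "lt (mon d j i) (mon d i j)" "g = BB d i j" by blast
  have ne: "mon d i j \<noteq> mon d j i" using mon_neq[of i j d] ij dpos by auto
  have ne': "mon d j i \<noteq> mon d i j" using ne by auto
  have nlt: "\<not> lt (mon d i j) (mon d j i)" using ij(2) to_props(1,2)[OF to] by metis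
  show "g \<in> monic lt ` {fpoly d i j | i j. i < j}"
  proof (cases "i < j")
    case True
    have "g = monic lt (fpoly d i j)" by (simp add: fpoly_BB ij(3) monic_BB[OF to ne] ij(2))
    moreover have "fpoly d i j \<in> {fpoly d i j | i j. i < j}" using True by blast
    ultimately show ?thesis by (rule image_eqI)
  next
    case False
    then have "j < i" using ij(1) by auto
    have "g = monic lt (fpoly d j i)" by (simp add: fpoly_BB ij(3) monic_BB[OF to ne'] nlt)
    moreover have "fpoly d j i \<in> {fpoly d i j | i j. i < j}" using \<open>j < i\<close> by blast
    ultimately show ?thesis by (rule image_eqI)
  qed
qed

lemma gen_ideal_mem: "h \<in> B \<Longrightarrow> c * h \<in> gen_ideal B"
  unfolding gen_ideal_def by (rule CollectI, rule exI[of _ "{h}"], rule exI[of _ "\<lambda>_. c"]) simp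

theorem theorem4p1:
  fixes d :: "'n::{finite,linorder} \<Rightarrow> nat"
    and lt :: "((bool \<times> 'n) \<Rightarrow>\<^sub>0 nat) \<Rightarrow> ((bool \<times> 'n) \<Rightarrow>\<^sub>0 nat) \<Rightarrow> bool"
  assumes "card (UNIV :: 'n set) \<ge> 2"
    and "\<forall>i. d i > 0"
    and "term_order lt"
  shows "is_reduced_GB lt
           (gen_ideal {minor2 (Dmat d :: bool \<Rightarrow> 'n \<Rightarrow> (bool \<times> 'n, 'a::field) mpoly) i j | i j. i < j})
           (monic lt ` {fpoly d i j | i j. i < j})"
proof -
  note to = assms(3) and dpos = assms(2)
  define I where "I = gen_ideal {minor2 (Dmat d :: bool \<Rightarrow> 'n \<Rightarrow> (bool \<times> 'n, 'a::field) mpoly) i j | i j. i < j}"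
  define G where "G = (monic lt ` {fpoly d i j | i j. i < j} :: (bool \<times> 'n, 'a) mpoly set)"
  have Gc: "g \<in> G \<longleftrightarrow> (\<exists>i j. i \<noteq> j \<and> lt (mon d j i) (mon d i j) \<and> g = BB d i j)" for g
    unfolding G_def by (rule G_char[OF to dpos])
  have lmG: "lm lt (BB d i j :: (bool \<times> 'n, 'a) mpoly) = mon d i j"
    and lcG: "lc lt (BB d i j :: (bool \<times> 'n, 'a) mpoly) = 1"
    and nzG: "(BB d i j :: (bool \<times> 'n, 'a) mpoly) \<noteq> 0"
    and kG: "Poly_Mapping.keys (BB d i j :: (bool \<times> 'n, 'a) mpoly) = {mon d i j, mon d j i}"
    if "i \<noteq> j" "lt (mon d j i) (mon d i j)" for i j
  proof -
    have ne: "mon d i j \<noteq> mon d j i" using mon_neq[of i j d] that dpos by auto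
    show l: "lm lt (BB d i j :: (bool \<times> 'n, 'a) mpoly) = mon d i j" by (rule lm_BB[OF to ne that(2)])
    show "lc lt (BB d i j :: (bool \<times> 'n, 'a) mpoly) = 1"
      unfolding lc_def l using ne by (simp add: BB_def lookup_minus lookup_single when_def)
    show k: "Poly_Mapping.keys (BB d i j :: (bool \<times> 'n, 'a) mpoly) = {mon d i j, mon d j i}"
      by (rule keys_BB[OF ne])
    show "(BB d i j :: (bool \<times> 'n, 'a) mpoly) \<noteq> 0"
    proof
      assume "(BB d i j :: (bool \<times> 'n, 'a) mpoly) = 0"
      then show False using k by simp
    qed
  qed
  have finG: "finite G"
  proof -
    have "{fpoly d i j | i j. i < j} \<subseteq> (\<lambda>(i,j). (fpoly d i j :: (bool \<times> 'n, 'a) mpoly)) ` UNIV" by auto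
    moreover have "finite ((\<lambda>(i,j). (fpoly d i j :: (bool \<times> 'n, 'a) mpoly)) ` UNIV)" by simp
    ultimately show ?thesis unfolding G_def by (intro finite_imageI) (rule finite_subset)
  qed
  have GI: "G \<subseteq> I"
  proof
    fix g assume "g \<in> G"
    then obtain i j where ij: "i \<noteq> j" "g = BB d i j" using Gc by blast
    show "g \<in> I"
    proof (cases "i < j")
      case True
      have "1 * minor2 (Dmat d) i j \<in> I" unfolding I_def
        by (rule gen_ideal_mem) (use True in blast)
      then show ?thesis using ij by (simp add: minor2_BB)
    next
      case False
      then have "j < i" using ij by auto
      have "(-1) * minor2 (Dmat d) j i \<in> I" unfolding I_def
        by (rule gen_ideal_mem) (use \<open>j < i\<close> in blast)
      then show ?thesis using ij by (simp add: minor2_BB BB_swap[of d j i])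
    qed
  qed
  have main: "\<exists>g\<in>G. g \<noteq> 0 \<and> mdvd (lm lt g) (lm lt f)" if fI: "f \<in> I" and f0: "f \<noteq> 0" for f
  proof (rule ccontr)
    assume nog: "\<not> (\<exists>g\<in>G. g \<noteq> 0 \<and> mdvd (lm lt g) (lm lt f))"
    define t where "t = lm lt f"
    have lp: "t \<in> Poly_Mapping.keys f \<and> (\<forall>s\<in>Poly_Mapping.keys f. s \<noteq> t \<longrightarrow> lt s t)"
      unfolding t_def using f0 by (intro lm_prop[OF to]) auto
    have LL0: "LL d (inv_m d t) f = 0" using LL_ideal[OF dpos] fI unfolding I_def by blast
    have "\<exists>s\<in>Poly_Mapping.keys f - {t}. inv_m d s = inv_m d t"
    proof (rule ccontr)
      assume "\<not> ?thesis"
      then have "LL d (inv_m d t) f = Poly_Mapping.lookup f t"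
        unfolding LL_def using lp
        by (subst sum.remove[of _ t]) (auto intro!: sum.neutral)
      then show False using LL0 lp by (simp add: in_keys_iff)
    qed
    then obtain s where s: "s \<in> Poly_Mapping.keys f" "s \<noteq> t" "inv_m d s = inv_m d t" by blast
    have lst: "lt s t" using lp s by blast
    have std: "\<forall>i j. i \<noteq> j \<longrightarrow> lt (mon d j i) (mon d i j) \<longrightarrow> \<not> mdvd (mon d i j) t"
    proof (intro allI impI)
      fix i j assume h: "i \<noteq> j" "lt (mon d j i) (mon d i j)"
      have "BB d i j \<in> G" using Gc h by blast
      then have "\<not> mdvd (lm lt (BB d i j :: (bool \<times> 'n, 'a) mpoly)) t" using nog nzG[OF h] unfolding t_def by blast
      then show "\<not> mdvd (mon d i j) t" unfolding lmG[OF h] .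
    qed
    have "s = t \<or> lt t s" using key[OF to dpos std s(3)] .
    then show False using s(2) lst to_props(1,2)[OF to] by metis
  qed
  have red: "\<forall>g\<in>G. \<forall>g'\<in>G. g' \<noteq> g \<longrightarrow> (\<forall>t\<in>Poly_Mapping.keys g. \<not> mdvd (lm lt g') t)"
  proof (intro ballI impI)
    fix g g' t assume g: "g \<in> G" and g': "g' \<in> G" and ne: "g' \<noteq> g" and t: "t \<in> Poly_Mapping.keys g"
    obtain i j where ij: "i \<noteq> j" "lt (mon d j i) (mon d i j)" "g = BB d i j" using g Gc by blast
    obtain k l where kl: "k \<noteq> l" "lt (mon d l k) (mon d k l)" "g' = BB d k l" using g' Gc by blast
    show "\<not> mdvd (lm lt g') t"
    proof
      assume dv: "mdvd (lm lt g') t"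
      have "t = mon d i j \<or> t = mon d j i" using t kG[OF ij(1,2)] ij(3) by auto
      have dv': "mdvd (mon d k l) t" using dv lmG[OF kl(1,2)] kl(3) by simp
      from \<open>t = mon d i j \<or> t = mon d j i\<close> have "(k = i \<and> l = j) \<or> (k = j \<and> l = i)"
      proof
        assume "t = mon d i j" then show ?thesis using mdvd_mon[OF _ kl(1) dpos] dv' by blast
      next
        assume "t = mon d j i" then show ?thesis using mdvd_mon[OF _ kl(1) dpos] dv' by blast
      qed
      then show False
      proof
        assume "k = i \<and> l = j" then show False using ne ij kl by simp
      next
        assume "k = j \<and> l = i"
        then have "lt (mon d i j) (mon d j i)" using kl by simp
        then show False using ij(2) to_props(1,2)[OF to] by metis
      qed
    qed
  qed
  have "is_reduced_GB lt I G"
    unfolding is_reduced_GB_def is_GB_def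
  proof (intro conjI)
    show "finite G" by (rule finG)
    show "G \<subseteq> I" by (rule GI)
    show "\<forall>f\<in>I. f \<noteq> 0 \<longrightarrow> (\<exists>g\<in>G. g \<noteq> 0 \<and> mdvd (lm lt g) (lm lt f))" using main by blast
    show "0 \<notin> G"
    proof
      assume "0 \<in> G"
      then obtain i j where "i \<noteq> j" "lt (mon d j i) (mon d i j)" "(0::(bool \<times> 'n, 'a) mpoly) = BB d i j" using Gc[of 0] by blast
      then show False using nzG by metis
    qed
    show "\<forall>g\<in>G. lc lt g = 1"
    proof
      fix g assume "g \<in> G"
      then obtain i j where "i \<noteq> j" "lt (mon d j i) (mon d i j)" "g = BB d i j" using Gc[of g] by blast
      then show "lc lt g = 1" using lcG by simp
    qed
    show "\<forall>g\<in>G. \<forall>g'\<in>G. g' \<noteq> g \<longrightarrow> (\<forall>t\<in>Poly_Mapping.keys g. \<not> mdvd (lm lt g') t)" by (rule red)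
  qed
  then show ?thesis unfolding I_def G_def .
qed

end
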